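(* Let $V\subset U\subset\mathcal{A}_0$, and suppose that for every continuous linear functional $\lambda$ on $\mathcal{A}$, with $\lambda:=g$, we have $g(0)\in\lambda(V)$. Then the following are equivalent: (a) $\lambda(U)=\lambda(V)$ for every continuous linear functional $\lambda$ on $\mathcal{A}$; (b) for every continuous linear functional $\lambda$ on $\mathcal{A}$, $0\notin\lambda(V)$ implies $0\notin\lambda(U)$; (c) $U^T=V^T$.
   Context: $D=\{z:|z|<1\}$, $\overline D$ its closure. $\mathcal{A}$ is the space of functions $f(z)=\sum_{k\ge0}a_k(f)z^k$ analytic in $D$, with the topology of locally uniform convergence; $\mathcal{A}_0=\{f\in\mathcal{A}: a_0(f)=1\}$. $\mathcal{A}(\overline D)$ is the set of functions analytic in some disk $\{|z|<R\}$ with $R>1$, and $\mathcal{A}_0(\overline D)=\{g\in\mathcal{A}(\overline D):a_0(g)=1\}$. The Hadamard product is $(f*g)(z)=\sum_{k\ge0}a_k(f)a_k(g)z^k$. Every continuous linear functional $\lambda$ on $\mathcal{A}$ has the form $\lambda(f)=(f*g)(1)$ for a function $g\in\mathcal{A}(\overline D)$; this is written $\lambda:=g$. For $V\subset\mathcal{A}_0$, $V^T=\{g\in\mathcal{A}_0(\overline D): (f*g)(1)\ne0 \ \forall f\in V\}$. *)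

theory Defs
  imports "HOL-Analysis.Analysis"
begin

definition acoeff :: "nat \<Rightarrow> (complex \<Rightarrow> complex) \<Rightarrow> complex" where
  "acoeff k f = (deriv ^^ k) f 0 / of_nat (fact k)"

definition A_space :: "(complex \<Rightarrow> complex) set" where
  "A_space = {f. f holomorphic_on ball 0 1}"

definition A0 :: "(complex \<Rightarrow> complex) set" where
  "A0 = {f \<in> A_space. acoeff 0 f = 1}"

definition A_closed :: "(complex \<Rightarrow> complex) set" where
  "A_closed = {g. \<exists>R>1. g holomorphic_on ball 0 R}"

definition A0_closed :: "(complex \<Rightarrow> complex) set" where
  "A0_closed = {g \<in> A_closed. acoeff 0 g = 1}"

text \<open>Hadamard product evaluated at 1, i.e. the continuous linear functional
  lambda := g applied to f: (f * g)(1) = sum_k a_k(f) a_k(g).\<close>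
definition hadamard_at1 :: "(complex \<Rightarrow> complex) \<Rightarrow> (complex \<Rightarrow> complex) \<Rightarrow> complex" where
  "hadamard_at1 f g = (\<Sum>k. acoeff k f * acoeff k g)"

definition lam :: "(complex \<Rightarrow> complex) \<Rightarrow> (complex \<Rightarrow> complex) \<Rightarrow> complex" where
  "lam g f = hadamard_at1 f g"

definition T_dual :: "(complex \<Rightarrow> complex) set \<Rightarrow> (complex \<Rightarrow> complex) set" where
  "T_dual V = {g \<in> A0_closed. \<forall>f\<in>V. hadamard_at1 f g \<noteq> 0}"

end

theory Submission
  imports Defs "HOL-Complex_Analysis.Complex_Analysis"
begin

lemma taylor_summable:
  assumes "f holomorphic_on ball 0 R" "0 \<le> t" "t < R"
  shows "summable (\<lambda>n. acoeff n f * (complex_of_real t)^n)"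
proof -
  have "(\<lambda>n. (deriv ^^ n) f 0 / (fact n) * (complex_of_real t - 0)^n) sums f (complex_of_real t)"
    by (rule holomorphic_power_series[OF assms(1)]) (use assms in auto)
  then show ?thesis unfolding acoeff_def by (auto simp: sums_iff)
qed

lemma had_summable:
  assumes f: "f \<in> A_space" and g: "g \<in> A_closed"
  shows "summable (\<lambda>k. acoeff k f * acoeff k g)"
proof -
  obtain R where R: "R > 1" "g holomorphic_on ball 0 R" using g by (auto simp: A_closed_def)
  define s where "s = (1 + min R 2) / 2"
  have s: "1 < s" "s < R" using R by (auto simp: s_def)
  define r where "r = 1 / s"
  have r: "0 < r" "r < 1" "r * s = 1" using s by (auto simp: r_def)
  have fh: "f holomorphic_on ball 0 1" using f by (auto simp: A_space_def)
  have "summable (\<lambda>n. acoeff n g * (complex_of_real s)^n)"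
    by (rule taylor_summable[OF R(2)]) (use s in auto)
  then have "Bseq (\<lambda>n. acoeff n g * (complex_of_real s)^n)" by (rule summable_imp_Bseq)
  then obtain K where K: "K > 0" "\<And>n. norm (acoeff n g * (complex_of_real s)^n) \<le> K"
    by (auto elim: BseqE)
  have "summable (\<lambda>n. acoeff n f * (complex_of_real ((1 + r)/2))^n)"
    by (rule taylor_summable[OF fh]) (use r in auto)
  then have sf: "summable (\<lambda>n. norm (acoeff n f * (complex_of_real r)^n))"
  proof (rule powser_insidea)
    have "norm (complex_of_real ((1 + r)/2)) = (1+r)/2" using r by (simp only: norm_of_real) simp
    then show "norm (complex_of_real r) < norm (complex_of_real ((1 + r)/2))" using r by simp
  qed
  show ?thesis
  proof (rule summable_comparison_test')
    show "summable (\<lambda>n. norm (acoeff n f * (complex_of_real r)^n) * K)"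
      using sf by (rule summable_mult2)
    fix n :: nat
    have "acoeff n f * acoeff n g = (acoeff n f * (complex_of_real r)^n) * (acoeff n g * (complex_of_real s)^n)"
    proof -
      have "(complex_of_real r)^n * (complex_of_real s)^n = 1"
        by (metis of_real_1 of_real_mult power_mult_distrib power_one r(3))
      then show ?thesis by (metis (no_types, lifting) mult.assoc mult.left_commute mult.right_neutral)
    qed
    then have "norm (acoeff n f * acoeff n g) = norm (acoeff n f * (complex_of_real r)^n) * norm (acoeff n g * (complex_of_real s)^n)"
      by (metis norm_mult)
    also have "\<dots> \<le> norm (acoeff n f * (complex_of_real r)^n) * K"
      by (rule mult_left_mono[OF K(2)]) simp
    finally show "norm (acoeff n f * acoeff n g) \<le> norm (acoeff n f * (complex_of_real r)^n) * K" .
  qed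
qed

lemma acoeff_shift:
  assumes "g holomorphic_on ball 0 R" "R > 0"
  shows "acoeff k (\<lambda>z. g z - c) = (if k = 0 then acoeff k g - c else acoeff k g)"
proof -
  have "(deriv ^^ k) (\<lambda>z. g z - c) 0 = (deriv ^^ k) g 0 - (deriv ^^ k) (\<lambda>z. c) 0"
    by (rule higher_deriv_diff[OF assms(1)]) (use assms in auto)
  then show ?thesis by (auto simp: acoeff_def)
qed

lemma acoeff_cmult:
  assumes "g holomorphic_on ball 0 R" "R > 0"
  shows "acoeff k (\<lambda>z. c * g z) = c * acoeff k g"
proof -
  have "(deriv ^^ k) (\<lambda>z. c * g z) 0 = c * (deriv ^^ k) g 0"
    by (rule higher_deriv_cmult[OF assms(1)]) (use assms in auto)
  then show ?thesis by (auto simp: acoeff_def)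
qed

lemma lam_shift:
  assumes f: "f \<in> A0" and g: "g \<in> A_closed"
  shows "(\<lambda>z. g z - c) \<in> A_closed" "lam (\<lambda>z. g z - c) f = lam g f - c"
proof -
  obtain R where R: "R > 1" "g holomorphic_on ball 0 R" using g by (auto simp: A_closed_def)
  show g': "(\<lambda>z. g z - c) \<in> A_closed" using R by (auto simp: A_closed_def intro!: holomorphic_intros)
  have fA: "f \<in> A_space" and f0: "acoeff 0 f = 1" using f by (auto simp: A0_def)
  have s1: "summable (\<lambda>k. acoeff k f * acoeff k g)" by (rule had_summable[OF fA g])
  have s2: "summable (\<lambda>k. acoeff k f * acoeff k (\<lambda>z. g z - c))" by (rule had_summable[OF fA g'])
  have "lam (\<lambda>z. g z - c) f = acoeff 0 f * acoeff 0 (\<lambda>z. g z - c) + (\<Sum>k. acoeff (Suc k) f * acoeff (Suc k) (\<lambda>z. g z - c))"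
    unfolding lam_def hadamard_at1_def using suminf_split_head[OF s2] by simp
  also have "\<dots> = acoeff 0 g - c + (\<Sum>k. acoeff (Suc k) f * acoeff (Suc k) g)"
    using acoeff_shift[OF R(2)] R f0 by simp
  also have "\<dots> = lam g f - c"
    unfolding lam_def hadamard_at1_def using suminf_split_head[OF s1] f0 by simp
  finally show "lam (\<lambda>z. g z - c) f = lam g f - c" .
qed

lemma lam_scale:
  assumes f: "f \<in> A_space" and g: "g \<in> A_closed"
  shows "(\<lambda>z. c * g z) \<in> A_closed" "lam (\<lambda>z. c * g z) f = c * lam g f"
proof -
  obtain R where R: "R > 1" "g holomorphic_on ball 0 R" using g by (auto simp: A_closed_def)
  show g': "(\<lambda>z. c * g z) \<in> A_closed" using R by (auto simp: A_closed_def intro!: holomorphic_intros)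
  have s1: "summable (\<lambda>k. acoeff k f * acoeff k g)" by (rule had_summable[OF f g])
  have "lam (\<lambda>z. c * g z) f = (\<Sum>k. c * (acoeff k f * acoeff k g))"
    unfolding lam_def hadamard_at1_def using acoeff_cmult[OF R(2)] R
    by (simp add: mult.left_commute)
  also have "\<dots> = c * lam g f" unfolding lam_def hadamard_at1_def by (rule suminf_mult[OF s1])
  finally show "lam (\<lambda>z. c * g z) f = c * lam g f" .
qed

lemma acoeff0: "acoeff 0 g = g 0" by (simp add: acoeff_def)

theorem lemma4:
  fixes U V :: "(complex \<Rightarrow> complex) set"
  assumes "V \<subseteq> U" and "U \<subseteq> A0"
    and "\<forall>g\<in>A_closed. g 0 \<in> lam g ` V"
  shows "((\<forall>g\<in>A_closed. lam g ` U = lam g ` V) \<longleftrightarrow>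
          (\<forall>g\<in>A_closed. 0 \<notin> lam g ` V \<longrightarrow> 0 \<notin> lam g ` U))
       \<and> ((\<forall>g\<in>A_closed. 0 \<notin> lam g ` V \<longrightarrow> 0 \<notin> lam g ` U) \<longleftrightarrow>
          T_dual U = T_dual V)"
proof -
  have UA: "\<And>f. f \<in> U \<Longrightarrow> f \<in> A_space" "\<And>f. f \<in> U \<Longrightarrow> f \<in> A0" using assms(2) by (auto simp: A0_def)
  have ab: "(\<forall>g\<in>A_closed. lam g ` U = lam g ` V) \<longleftrightarrow>
          (\<forall>g\<in>A_closed. 0 \<notin> lam g ` V \<longrightarrow> 0 \<notin> lam g ` U)"
  proof
    assume "\<forall>g\<in>A_closed. lam g ` U = lam g ` V" then show "\<forall>g\<in>A_closed. 0 \<notin> lam g ` V \<longrightarrow> 0 \<notin> lam g ` U" by auto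
  next
    assume b: "\<forall>g\<in>A_closed. 0 \<notin> lam g ` V \<longrightarrow> 0 \<notin> lam g ` U"
    show "\<forall>g\<in>A_closed. lam g ` U = lam g ` V"
    proof (intro ballI equalityI)
      fix g assume g: "g \<in> A_closed"
      show "lam g ` V \<subseteq> lam g ` U" using assms(1) by auto
      show "lam g ` U \<subseteq> lam g ` V"
      proof
        fix w assume "w \<in> lam g ` U"
        then obtain f where f: "f \<in> U" "w = lam g f" by auto
        show "w \<in> lam g ` V"
        proof (rule ccontr)
          assume nw: "w \<notin> lam g ` V"
          have g': "(\<lambda>z. g z - w) \<in> A_closed" using lam_shift[OF UA(2)[OF f(1)] g] by blast
          have "0 \<notin> lam (\<lambda>z. g z - w) ` V"
          proof
            assume "0 \<in> lam (\<lambda>z. g z - w) ` V"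
            then obtain h where h: "h \<in> V" "lam (\<lambda>z. g z - w) h = 0" by auto
            have "h \<in> U" using h assms(1) by auto
            then have "lam g h = w" using lam_shift(2)[OF UA(2) g, of h w] h by simp
            then show False using nw h by auto
          qed
          then have "0 \<notin> lam (\<lambda>z. g z - w) ` U" using b g' by blast
          moreover have "lam (\<lambda>z. g z - w) f = 0" using lam_shift(2)[OF UA(2)[OF f(1)] g, of w] f by simp
          ultimately show False using f by auto
        qed
      qed
    qed
  qed
  have bc: "(\<forall>g\<in>A_closed. 0 \<notin> lam g ` V \<longrightarrow> 0 \<notin> lam g ` U) \<longleftrightarrow> T_dual U = T_dual V"
  proof
    assume b: "\<forall>g\<in>A_closed. 0 \<notin> lam g ` V \<longrightarrow> 0 \<notin> lam g ` U"
    show "T_dual U = T_dual V"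
    proof
      show "T_dual U \<subseteq> T_dual V" using assms(1) by (auto simp: T_dual_def)
      show "T_dual V \<subseteq> T_dual U"
      proof
        fix g assume g: "g \<in> T_dual V"
        then have gA: "g \<in> A_closed" "g \<in> A0_closed" by (auto simp: T_dual_def A0_closed_def)
        have "0 \<notin> lam g ` V" using g by (auto simp: T_dual_def lam_def)
        then have "0 \<notin> lam g ` U" using b gA by blast
        then show "g \<in> T_dual U" using gA by (force simp: T_dual_def lam_def)
      qed
    qed
  next
    assume c: "T_dual U = T_dual V"
    show "\<forall>g\<in>A_closed. 0 \<notin> lam g ` V \<longrightarrow> 0 \<notin> lam g ` U"
    proof (intro ballI impI)
      fix g assume g: "g \<in> A_closed" and nV: "0 \<notin> lam g ` V"
      have g0: "g 0 \<noteq> 0" using assms(3) g nV by metis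
      define c0 where "c0 = inverse (g 0)"
      have c0: "c0 \<noteq> 0" using g0 by (simp add: c0_def)
      have g'': "(\<lambda>z. c0 * g z) \<in> A_closed" using g by (auto simp: A_closed_def intro!: holomorphic_intros)
      have "(\<lambda>z. c0 * g z) \<in> A0_closed" using g'' g0 by (simp add: A0_closed_def acoeff0 c0_def)
      moreover have "\<forall>f\<in>V. hadamard_at1 f (\<lambda>z. c0 * g z) \<noteq> 0"
      proof
        fix f assume f: "f \<in> V"
        then have "f \<in> U" using assms(1) by auto
        then have "hadamard_at1 f (\<lambda>z. c0 * g z) = c0 * lam g f"
          using lam_scale(2)[OF UA(1) g] by (simp add: lam_def)
        then show "hadamard_at1 f (\<lambda>z. c0 * g z) \<noteq> 0" using c0 nV f by auto
      qed
      ultimately have "(\<lambda>z. c0 * g z) \<in> T_dual V" by (simp add: T_dual_def)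
      then have "(\<lambda>z. c0 * g z) \<in> T_dual U" using c by simp
      then show "0 \<notin> lam g ` U"
        using lam_scale(2)[OF UA(1) g] by (auto simp: T_dual_def lam_def)
    qed
  qed
  show ?thesis using ab bc by blast
qed

end
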